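(* Let $G$ be a finite graph and $a\in V(G)$. Suppose $G=H_1\cup\dots\cup H_m$ ($m\ge1$), where each $H_j$ is a connected subgraph of $G$ containing $a$ such that $H_j-a$ is nonempty and connected, $V(H_j)\cap V(H_l)=\{a\}$ for $j\ne l$, and every edge of $G$ lies in exactly one $H_j$. Call $H_j$ and $H_l$ equivalent if there is a graph isomorphism $H_j\to H_l$ mapping $a$ to $a$, and suppose there are $g$ equivalence classes, the $i$-th consisting of $m_i$ graphs each isomorphic (with $a\mapsto a$) to a graph $G_i$. Then for every positive integer $k$, $$D(G,k;a)=k\prod_{i=1}^g\binom{D(G_i,k;a)/k}{m_i}.$$
   Context: A $k$-labeling of a graph $X$ is a map $\phi:V(X)\to\{1,\dots,k\}$; an automorphism $\pi$ preserves $\phi$ if $\phi(\pi(v))=\phi(v)$ for all $v$. For a subgroup $\Gamma\le\mathrm{Aut}(X)$, $\phi$ is $\Gamma$-distinguishing if the only element of $\Gamma$ preserving $\phi$ is the identity; $\phi,\phi'$ are equivalent with respect to $\Gamma$ if some $\pi\in\Gamma$ satisfies $\phi'(\pi(v))=\phi(v)$ for all $v$; $D(X,k;\Gamma)$ is the number of $\Gamma$-equivalence classes of $\Gamma$-distinguishing $k$-labelings. For a vertex $a$, $\mathrm{Aut}(X;a)$ is the group of automorphisms of $X$ fixing $a$, and $D(X,k;a):=D(X,k;\mathrm{Aut}(X;a))$ (which is divisible by $k$). *)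

theory Defs
  imports Main "HOL-Library.FuncSet"
begin

definition graph :: "'a set \<Rightarrow> ('a \<Rightarrow> 'a \<Rightarrow> bool) \<Rightarrow> bool" where
  "graph V E \<longleftrightarrow> finite V \<and> (\<forall>x y. E x y \<longrightarrow> x \<in> V \<and> y \<in> V)
     \<and> (\<forall>x y. E x y \<longrightarrow> E y x) \<and> (\<forall>x. \<not> E x x)"

definition connected_graph :: "'a set \<Rightarrow> ('a \<Rightarrow> 'a \<Rightarrow> bool) \<Rightarrow> bool" where
  "connected_graph V E \<longleftrightarrow> V \<noteq> {} \<and>
     (\<forall>x\<in>V. \<forall>y\<in>V. (\<lambda>u v. u \<in> V \<and> v \<in> V \<and> E u v)\<^sup>*\<^sup>* x y)"

definition aut :: "'a set \<Rightarrow> ('a \<Rightarrow> 'a \<Rightarrow> bool) \<Rightarrow> ('a \<Rightarrow> 'a) set" where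
  "aut V E = {\<pi>. bij_betw \<pi> V V \<and> (\<forall>x\<in>V. \<forall>y\<in>V. E x y \<longleftrightarrow> E (\<pi> x) (\<pi> y))
                 \<and> (\<forall>x. x \<notin> V \<longrightarrow> \<pi> x = x)}"

definition aut_fix :: "'a set \<Rightarrow> ('a \<Rightarrow> 'a \<Rightarrow> bool) \<Rightarrow> 'a \<Rightarrow> ('a \<Rightarrow> 'a) set" where
  "aut_fix V E a = {\<pi> \<in> aut V E. \<pi> a = a}"

definition rooted_iso :: "'a set \<Rightarrow> ('a \<Rightarrow> 'a \<Rightarrow> bool) \<Rightarrow> 'a \<Rightarrow>
    'b set \<Rightarrow> ('b \<Rightarrow> 'b \<Rightarrow> bool) \<Rightarrow> 'b \<Rightarrow> bool" where
  "rooted_iso V1 E1 a1 V2 E2 a2 \<longleftrightarrow> (\<exists>f. bij_betw f V1 V2 \<and>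
     (\<forall>x\<in>V1. \<forall>y\<in>V1. E1 x y \<longleftrightarrow> E2 (f x) (f y)) \<and> f a1 = a2)"

definition dist_labelings :: "'a set \<Rightarrow> ('a \<Rightarrow> 'a) set \<Rightarrow> nat \<Rightarrow> ('a \<Rightarrow> nat) set" where
  "dist_labelings V \<Gamma> k = {\<phi> \<in> V \<rightarrow>\<^sub>E {1..k}.
      \<forall>\<pi>\<in>\<Gamma>. (\<forall>v\<in>V. \<phi> (\<pi> v) = \<phi> v) \<longrightarrow> \<pi> = id}"

definition lab_equiv :: "'a set \<Rightarrow> ('a \<Rightarrow> 'a) set \<Rightarrow> ('a \<Rightarrow> nat) \<Rightarrow> ('a \<Rightarrow> nat) \<Rightarrow> bool" where
  "lab_equiv V \<Gamma> \<phi> \<phi>' \<longleftrightarrow> (\<exists>\<pi>\<in>\<Gamma>. \<forall>v\<in>V. \<phi>' (\<pi> v) = \<phi> v)"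

definition D :: "'a set \<Rightarrow> ('a \<Rightarrow> 'a) set \<Rightarrow> nat \<Rightarrow> nat" where
  "D V \<Gamma> k = card ((\<lambda>\<phi>. {\<psi> \<in> dist_labelings V \<Gamma> k. lab_equiv V \<Gamma> \<phi> \<psi>})
                    ` dist_labelings V \<Gamma> k)"

definition D_root :: "'a set \<Rightarrow> ('a \<Rightarrow> 'a \<Rightarrow> bool) \<Rightarrow> nat \<Rightarrow> 'a \<Rightarrow> nat" where
  "D_root V E k a = D V (aut_fix V E a) k"

end

theory Submission
  imports Defs
begin

definition iso :: "'a set \<Rightarrow> ('a \<Rightarrow> 'a \<Rightarrow> bool) \<Rightarrow> 'b set \<Rightarrow> ('b \<Rightarrow> 'b \<Rightarrow> bool) \<Rightarrow> ('a \<Rightarrow> 'b) \<Rightarrow> bool" where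
  "iso W1 F1 W2 F2 f \<longleftrightarrow> bij_betw f W1 W2 \<and> (\<forall>x\<in>W1. \<forall>y\<in>W1. F1 x y \<longleftrightarrow> F2 (f x) (f y))"

lemma iso_inv:
  assumes "iso W1 F1 W2 F2 f" shows "iso W2 F2 W1 F1 (inv_into W1 f)"
proof -
  have b: "bij_betw f W1 W2" and e: "\<forall>x\<in>W1. \<forall>y\<in>W1. F1 x y \<longleftrightarrow> F2 (f x) (f y)"
    using assms by (auto simp: iso_def)
  have b2: "bij_betw (inv_into W1 f) W2 W1" using b by (rule bij_betw_inv_into)
  have "F2 x y \<longleftrightarrow> F1 (inv_into W1 f x) (inv_into W1 f y)" if "x \<in> W2" "y \<in> W2" for x y
  proof -
    have "inv_into W1 f x \<in> W1" "inv_into W1 f y \<in> W1" using b2 that bij_betwE by blast+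
    moreover have "f (inv_into W1 f x) = x" "f (inv_into W1 f y) = y"
      using b that by (auto simp: bij_betw_def f_inv_into_f)
    ultimately show ?thesis using e by metis
  qed
  thus ?thesis using b2 by (auto simp: iso_def)
qed

lemma iso_comp:
  assumes "iso W1 F1 W2 F2 f" "iso W2 F2 W3 F3 h" shows "iso W1 F1 W3 F3 (h \<circ> f)"
proof -
  have b: "bij_betw f W1 W2" "bij_betw h W2 W3" using assms by (auto simp: iso_def)
  have "f x \<in> W2" if "x \<in> W1" for x using b(1) that bij_betwE by blast
  thus ?thesis using assms bij_betw_trans[OF b] unfolding iso_def by auto
qed

lemma aut_iso: "\<pi> \<in> aut W F \<longleftrightarrow> iso W F W F \<pi> \<and> (\<forall>x. x \<notin> W \<longrightarrow> \<pi> x = x)"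
  by (auto simp: aut_def iso_def)

lemma aut_bij: assumes "\<pi> \<in> aut W F" shows "bij \<pi>"
proof -
  have b: "bij_betw \<pi> W W" and o: "\<forall>x. x \<notin> W \<longrightarrow> \<pi> x = x" using assms by (auto simp: aut_def)
  have "bij_betw \<pi> (-W) (-W)" using o unfolding bij_betw_def inj_on_def by force
  from bij_betw_combine[OF b this] show ?thesis by simp
qed

lemma aut_inv:
  assumes "\<pi> \<in> aut W F" shows "inv \<pi> \<in> aut W F" "inv \<pi> (\<pi> x) = x" "\<pi> (inv \<pi> x) = x"
proof -
  have bj: "bij \<pi>" using aut_bij[OF assms] .
  show i1: "inv \<pi> (\<pi> x) = x" for x using bj by (simp add: bij_is_inj)
  show i2: "\<pi> (inv \<pi> x) = x" for x using bj by (simp add: bij_is_surj surj_f_inv_f)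
  have b: "bij_betw \<pi> W W" and o: "\<forall>x. x \<notin> W \<longrightarrow> \<pi> x = x"
    and e: "\<forall>x\<in>W. \<forall>y\<in>W. F x y \<longleftrightarrow> F (\<pi> x) (\<pi> y)" using assms by (auto simp: aut_def)
  have inW: "inv \<pi> y \<in> W" if "y \<in> W" for y
    by (metis i2 o that)
  have out: "inv \<pi> y = y" if "y \<notin> W" for y by (metis i1 o that)
  have "inv \<pi> ` W = W"
  proof
    show "inv \<pi> ` W \<subseteq> W" using inW by auto
    show "W \<subseteq> inv \<pi> ` W"
    proof
      fix x assume "x \<in> W"
      hence "\<pi> x \<in> W" using b bij_betwE by blast
      thus "x \<in> inv \<pi> ` W" using i1 by (metis image_eqI)
    qed
  qed
  moreover have "inj_on (inv \<pi>) W" by (metis i2 inj_onI)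
  moreover have "F x y \<longleftrightarrow> F (inv \<pi> x) (inv \<pi> y)" if "x \<in> W" "y \<in> W" for x y
    using e inW that i2 by metis
  ultimately show "inv \<pi> \<in> aut W F" using out by (auto simp: aut_def bij_betw_def)
qed

lemma aut_comp:
  assumes "\<pi> \<in> aut W F" "\<rho> \<in> aut W F" shows "\<pi> \<circ> \<rho> \<in> aut W F"
  using assms iso_comp unfolding aut_iso by fastforce

lemma aut_id: "id \<in> aut W F"
  by (auto simp: aut_def)

lemma autf_id: "id \<in> aut_fix W F r" by (simp add: aut_fix_def aut_id)
lemma autf_comp: "\<pi> \<in> aut_fix W F r \<Longrightarrow> \<rho> \<in> aut_fix W F r \<Longrightarrow> \<pi> \<circ> \<rho> \<in> aut_fix W F r"
  by (simp add: aut_fix_def aut_comp)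
lemma autf_inv: assumes "\<pi> \<in> aut_fix W F r" shows "inv \<pi> \<in> aut_fix W F r"
  using assms aut_inv[of \<pi> W F] unfolding aut_fix_def by (metis (mono_tags, lifting) mem_Collect_eq)

lemma aut_in: "\<pi> \<in> aut W F \<Longrightarrow> x \<in> W \<Longrightarrow> \<pi> x \<in> W"
  unfolding aut_def using bij_betwE by blast
lemma aut_adj: "\<pi> \<in> aut W F \<Longrightarrow> x \<in> W \<Longrightarrow> y \<in> W \<Longrightarrow> F x y \<longleftrightarrow> F (\<pi> x) (\<pi> y)"
  unfolding aut_def by blast
lemma aut_inj: "\<pi> \<in> aut W F \<Longrightarrow> \<pi> x = \<pi> y \<Longrightarrow> x = y"
  using aut_bij bij_is_inj by (metis inj_eq)

definition cl :: "'a set \<Rightarrow> ('a \<Rightarrow> 'a) set \<Rightarrow> nat \<Rightarrow> ('a \<Rightarrow> nat) \<Rightarrow> ('a \<Rightarrow> nat) set" where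
  "cl W \<Gamma> k \<phi> = {\<psi> \<in> dist_labelings W \<Gamma> k. lab_equiv W \<Gamma> \<phi> \<psi>}"

lemma D_cl: "D W \<Gamma> k = card (cl W \<Gamma> k ` dist_labelings W \<Gamma> k)"
  by (simp add: D_def cl_def)

context
  fixes W :: "'a set" and F :: "'a \<Rightarrow> 'a \<Rightarrow> bool" and r :: 'a
begin

lemma eq_refl: "lab_equiv W (aut_fix W F r) \<phi> \<phi>"
  unfolding lab_equiv_def using autf_id[of W F r] by (metis id_apply)

lemma eq_sym: assumes "lab_equiv W (aut_fix W F r) \<phi> \<psi>" shows "lab_equiv W (aut_fix W F r) \<psi> \<phi>"
proof -
  obtain \<pi> where p: "\<pi> \<in> aut_fix W F r" "\<forall>v\<in>W. \<psi> (\<pi> v) = \<phi> v"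
    using assms by (auto simp: lab_equiv_def)
  have a: "\<pi> \<in> aut W F" using p by (simp add: aut_fix_def)
  have "\<forall>v\<in>W. \<phi> (inv \<pi> v) = \<psi> v"
    using p(2) aut_in[OF aut_inv(1)[OF a]] aut_inv(3)[OF a] by metis
  thus ?thesis using autf_inv[OF p(1)] by (auto simp: lab_equiv_def)
qed

lemma eq_trans: assumes "lab_equiv W (aut_fix W F r) \<phi> \<psi>" "lab_equiv W (aut_fix W F r) \<psi> \<chi>"
  shows "lab_equiv W (aut_fix W F r) \<phi> \<chi>"
proof -
  obtain \<pi> where p: "\<pi> \<in> aut_fix W F r" "\<forall>v\<in>W. \<psi> (\<pi> v) = \<phi> v"
    using assms by (auto simp: lab_equiv_def)
  obtain \<rho> where q: "\<rho> \<in> aut_fix W F r" "\<forall>v\<in>W. \<chi> (\<rho> v) = \<psi> v"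
    using assms by (auto simp: lab_equiv_def)
  have "\<forall>v\<in>W. \<chi> ((\<rho> \<circ> \<pi>) v) = \<phi> v"
    using p q aut_in[of \<pi> W F] by (auto simp: aut_fix_def)
  thus ?thesis using autf_comp[OF q(1) p(1)] unfolding lab_equiv_def by (metis comp_apply)
qed

lemma eq_root: assumes "lab_equiv W (aut_fix W F r) \<phi> \<psi>" "r \<in> W" shows "\<phi> r = \<psi> r"
  using assms by (auto simp: lab_equiv_def aut_fix_def)

lemma cl_eq_iff:
  assumes "\<phi> \<in> dist_labelings W (aut_fix W F r) k" "\<psi> \<in> dist_labelings W (aut_fix W F r) k"
  shows "cl W (aut_fix W F r) k \<phi> = cl W (aut_fix W F r) k \<psi> \<longleftrightarrow> lab_equiv W (aut_fix W F r) \<phi> \<psi>"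
proof
  assume "cl W (aut_fix W F r) k \<phi> = cl W (aut_fix W F r) k \<psi>"
  moreover have "\<psi> \<in> cl W (aut_fix W F r) k \<psi>" using assms eq_refl by (auto simp: cl_def)
  ultimately show "lab_equiv W (aut_fix W F r) \<phi> \<psi>" by (auto simp: cl_def)
next
  assume "lab_equiv W (aut_fix W F r) \<phi> \<psi>"
  thus "cl W (aut_fix W F r) k \<phi> = cl W (aut_fix W F r) k \<psi>"
    unfolding cl_def using eq_sym eq_trans by blast
qed

end


lemma card_image_kernel:
  assumes "\<forall>x\<in>A. \<forall>y\<in>A. f x = f y \<longleftrightarrow> h x = h y"
  shows "card (f ` A) = card (h ` A)"
proof -
  define q where "q y = h (inv_into A f y)" for y
  have qf: "q (f x) = h x" if "x \<in> A" for x
  proof -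
    have "inv_into A f (f x) \<in> A" "f (inv_into A f (f x)) = f x"
      using that by (auto simp: inv_into_into f_inv_into_f)
    thus ?thesis using assms that unfolding q_def by metis
  qed
  have "inj_on q (f ` A)" using qf assms by (auto simp: inj_on_def)
  moreover have "q ` f ` A = h ` A" using qf by (force simp: image_iff)
  ultimately show ?thesis by (metis card_image)
qed

context
  fixes W :: "'a set" and F :: "'a \<Rightarrow> 'a \<Rightarrow> bool" and r :: 'a and k :: nat
  assumes finW: "finite W" and rW: "r \<in> W" and k1: "k \<ge> 1"
begin

abbreviation "\<Gamma>0 \<equiv> aut_fix W F r"
abbreviation "dl \<equiv> dist_labelings W \<Gamma>0 k"
definition "Ar c = {\<phi> \<in> dl. \<phi> r = c}"

lemma fin_dl: "finite dl"
proof -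
  have "dl \<subseteq> W \<rightarrow>\<^sub>E {1..k}" by (auto simp: dist_labelings_def)
  thus ?thesis using finite_PiE[OF finW, of "\<lambda>_. {1..k}"] finite_subset by blast
qed

lemma relabel:
  assumes p: "\<pi> \<in> \<Gamma>0" and e: "\<phi> r = \<psi> r"
  shows "(\<forall>v\<in>W. (\<psi>(r:=c')) (\<pi> v) = (\<phi>(r:=c')) v) \<longleftrightarrow> (\<forall>v\<in>W. \<psi> (\<pi> v) = \<phi> v)"
proof -
  have a: "\<pi> \<in> aut W F" "\<pi> r = r" using p by (auto simp: aut_fix_def)
  have pr: "\<pi> v = r \<longleftrightarrow> v = r" for v using a aut_inj[OF a(1)] by metis
  have "(\<psi>(r:=c')) (\<pi> v) = (\<phi>(r:=c')) v \<longleftrightarrow> \<psi> (\<pi> v) = \<phi> v" for v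
  proof (cases "v = r")
    case True thus ?thesis using e a(2) by simp
  next
    case False hence "\<pi> v \<noteq> r" using pr by blast
    thus ?thesis using False by simp
  qed
  thus ?thesis by simp
qed

lemma relabel_dist:
  assumes "\<phi> \<in> dl" "c' \<in> {1..k}" shows "\<phi>(r:=c') \<in> dl"
proof -
  have "\<phi>(r:=c') \<in> W \<rightarrow>\<^sub>E {1..k}" using assms rW by (auto simp: dist_labelings_def PiE_def Pi_def extensional_def)
  moreover have "\<forall>\<pi>\<in>\<Gamma>0. (\<forall>v\<in>W. (\<phi>(r:=c')) (\<pi> v) = (\<phi>(r:=c')) v) \<longrightarrow> \<pi> = id"
    using relabel[of _ \<phi> \<phi> c'] assms(1) unfolding dist_labelings_def by blast
  ultimately show ?thesis unfolding dist_labelings_def by blast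
qed

lemma relabel_eq:
  assumes "\<phi> r = \<psi> r"
  shows "lab_equiv W \<Gamma>0 (\<phi>(r:=c')) (\<psi>(r:=c')) \<longleftrightarrow> lab_equiv W \<Gamma>0 \<phi> \<psi>"
  using assms relabel unfolding lab_equiv_def by metis

lemma card_Ar:
  assumes c: "c \<in> {1..k}" and c': "c' \<in> {1..k}"
  shows "card (cl W \<Gamma>0 k ` Ar c') = card (cl W \<Gamma>0 k ` Ar c)"
proof -
  define h where "h \<phi> = \<phi>(r:=c')" for \<phi> :: "'a \<Rightarrow> nat"
  have "h ` Ar c = Ar c'"
  proof
    show "h ` Ar c \<subseteq> Ar c'" using relabel_dist c' by (auto simp: h_def Ar_def)
    show "Ar c' \<subseteq> h ` Ar c"
    proof
      fix \<psi> assume "\<psi> \<in> Ar c'"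
      hence "\<psi>(r:=c) \<in> Ar c" "\<psi> = h (\<psi>(r:=c))" using relabel_dist c by (auto simp: h_def Ar_def)
      thus "\<psi> \<in> h ` Ar c" by blast
    qed
  qed
  hence "card (cl W \<Gamma>0 k ` Ar c') = card ((cl W \<Gamma>0 k \<circ> h) ` Ar c)" by (metis image_comp)
  also have "\<dots> = card (cl W \<Gamma>0 k ` Ar c)"
  proof (rule card_image_kernel, intro ballI)
    fix \<phi> \<psi> assume a: "\<phi> \<in> Ar c" "\<psi> \<in> Ar c"
    have "h \<phi> \<in> dl" "h \<psi> \<in> dl" using a relabel_dist c' by (auto simp: h_def Ar_def)
    hence "(cl W \<Gamma>0 k \<circ> h) \<phi> = (cl W \<Gamma>0 k \<circ> h) \<psi> \<longleftrightarrow> lab_equiv W \<Gamma>0 (h \<phi>) (h \<psi>)"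
      using cl_eq_iff by simp
    also have "\<dots> \<longleftrightarrow> lab_equiv W \<Gamma>0 \<phi> \<psi>" using a relabel_eq by (simp add: h_def Ar_def)
    also have "\<dots> \<longleftrightarrow> cl W \<Gamma>0 k \<phi> = cl W \<Gamma>0 k \<psi>" using a cl_eq_iff[of \<phi> W F r k \<psi>] by (simp add: Ar_def)
    finally show "(cl W \<Gamma>0 k \<circ> h) \<phi> = (cl W \<Gamma>0 k \<circ> h) \<psi> \<longleftrightarrow> cl W \<Gamma>0 k \<phi> = cl W \<Gamma>0 k \<psi>" .
  qed
  finally show ?thesis .
qed

lemma D_split: "D W \<Gamma>0 k = (\<Sum>c\<in>{1..k}. card (cl W \<Gamma>0 k ` Ar c))"
proof -
  have "dl = (\<Union>c\<in>{1..k}. Ar c)" using rW by (auto simp: Ar_def dist_labelings_def PiE_def Pi_def)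
  hence "cl W \<Gamma>0 k ` dl = (\<Union>c\<in>{1..k}. cl W \<Gamma>0 k ` Ar c)" by blast
  moreover have "card (\<Union>c\<in>{1..k}. cl W \<Gamma>0 k ` Ar c) = (\<Sum>c\<in>{1..k}. card (cl W \<Gamma>0 k ` Ar c))"
  proof (rule card_UN_disjoint)
    show "finite {1..k}" by simp
    show "\<forall>c\<in>{1..k}. finite (cl W \<Gamma>0 k ` Ar c)" using fin_dl by (auto simp: Ar_def)
    show "\<forall>c\<in>{1..k}. \<forall>c'\<in>{1..k}. c \<noteq> c' \<longrightarrow> cl W \<Gamma>0 k ` Ar c \<inter> cl W \<Gamma>0 k ` Ar c' = {}"
    proof (intro ballI impI)
      fix c c' :: nat assume "c \<noteq> c'"
      show "cl W \<Gamma>0 k ` Ar c \<inter> cl W \<Gamma>0 k ` Ar c' = {}"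
      proof (rule ccontr)
        assume "cl W \<Gamma>0 k ` Ar c \<inter> cl W \<Gamma>0 k ` Ar c' \<noteq> {}"
        then obtain \<phi> \<psi> where a: "\<phi> \<in> Ar c" "\<psi> \<in> Ar c'" "cl W \<Gamma>0 k \<phi> = cl W \<Gamma>0 k \<psi>" by auto
        hence "lab_equiv W \<Gamma>0 \<phi> \<psi>" using cl_eq_iff[of \<phi> W F r k \<psi>] by (auto simp: Ar_def)
        hence "\<phi> r = \<psi> r" using eq_root rW by metis
        thus False using a \<open>c \<noteq> c'\<close> by (auto simp: Ar_def)
      qed
    qed
  qed
  ultimately show ?thesis by (simp add: D_cl)
qed

lemma D_div:
  assumes c: "c \<in> {1..k}"
  shows "card (cl W \<Gamma>0 k ` Ar c) = D_root W F k r div k"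
proof -
  have "D_root W F k r = (\<Sum>c'\<in>{1..k}. card (cl W \<Gamma>0 k ` Ar c'))" by (simp add: D_root_def D_split)
  also have "\<dots> = (\<Sum>c'\<in>{1..k}. card (cl W \<Gamma>0 k ` Ar c))" using card_Ar[OF c] by (intro sum.cong) auto
  also have "\<dots> = k * card (cl W \<Gamma>0 k ` Ar c)" by simp
  finally show ?thesis using k1 by simp
qed

end


lemma iso_cong: "(\<And>x. x \<in> W1 \<Longrightarrow> f x = h x) \<Longrightarrow> iso W1 F1 W2 F2 f \<longleftrightarrow> iso W1 F1 W2 F2 h"
  unfolding iso_def using bij_betw_cong[of W1 f h W2] by auto

lemma iso_bij: "iso W1 F1 W2 F2 f \<Longrightarrow> bij_betw f W1 W2" by (simp add: iso_def)
lemma iso_adj: "iso W1 F1 W2 F2 f \<Longrightarrow> x \<in> W1 \<Longrightarrow> y \<in> W1 \<Longrightarrow> F1 x y \<longleftrightarrow> F2 (f x) (f y)"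
  by (simp add: iso_def)
lemma iso_in: "iso W1 F1 W2 F2 f \<Longrightarrow> x \<in> W1 \<Longrightarrow> f x \<in> W2"
  using iso_bij bij_betwE by blast
lemma iso_inj: "iso W1 F1 W2 F2 f \<Longrightarrow> x \<in> W1 \<Longrightarrow> y \<in> W1 \<Longrightarrow> f x = f y \<Longrightarrow> x = y"
  using iso_bij bij_betw_def inj_on_def by metis

locale cfg =
  fixes V :: "'a set" and E :: "'a \<Rightarrow> 'a \<Rightarrow> bool" and a :: 'a
    and m g :: nat and HV :: "nat \<Rightarrow> 'a set" and HE :: "nat \<Rightarrow> 'a \<Rightarrow> 'a \<Rightarrow> bool"
    and cls :: "nat \<Rightarrow> nat"
    and GV :: "nat \<Rightarrow> 'b set" and GE :: "nat \<Rightarrow> 'b \<Rightarrow> 'b \<Rightarrow> bool" and r :: "nat \<Rightarrow> 'b"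
    and k :: nat
  assumes G: "graph V E" and aV: "a \<in> V" and m: "m \<ge> 1"
    and Hsub: "\<And>j. j \<in> {1..m} \<Longrightarrow> graph (HV j) (HE j) \<and> HV j \<subseteq> V
                    \<and> (\<forall>x y. HE j x y \<longrightarrow> E x y)"
    and Hconn: "\<And>j. j \<in> {1..m} \<Longrightarrow> connected_graph (HV j) (HE j) \<and> a \<in> HV j"
    and Hdel: "\<And>j. j \<in> {1..m} \<Longrightarrow>
                 connected_graph (HV j - {a}) (\<lambda>x y. x \<noteq> a \<and> y \<noteq> a \<and> HE j x y)"
    and Hdisj: "\<And>j l. j \<in> {1..m} \<Longrightarrow> l \<in> {1..m} \<Longrightarrow> j \<noteq> l \<Longrightarrow> HV j \<inter> HV l = {a}"
    and Vunion: "V = (\<Union>j\<in>{1..m}. HV j)"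
    and Eunique: "\<And>x y. E x y \<Longrightarrow> \<exists>!j. j \<in> {1..m} \<and> HE j x y"
    and cls_range: "cls ` {1..m} = {1..g}"
    and cls_equiv: "\<And>j l. j \<in> {1..m} \<Longrightarrow> l \<in> {1..m} \<Longrightarrow>
        rooted_iso (HV j) (HE j) a (HV l) (HE l) a \<longleftrightarrow> cls j = cls l"
    and Gi: "\<And>i. i \<in> {1..g} \<Longrightarrow> graph (GV i) (GE i) \<and> r i \<in> GV i"
    and cls_iso: "\<And>j. j \<in> {1..m} \<Longrightarrow> rooted_iso (HV j) (HE j) a (GV (cls j)) (GE (cls j)) (r (cls j))"
    and k: "k \<ge> 1"
begin

lemma finV: "finite V" using G by (simp add: graph_def)
lemma Eirr: "\<not> E x x" using G by (simp add: graph_def)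
lemma HV_sub: "j \<in> {1..m} \<Longrightarrow> HV j \<subseteq> V" using Hsub by blast
lemma a_in: "j \<in> {1..m} \<Longrightarrow> a \<in> HV j" using Hconn by blast
lemma HE_in: "j \<in> {1..m} \<Longrightarrow> HE j u v \<Longrightarrow> u \<in> HV j \<and> v \<in> HV j"
  using Hsub unfolding graph_def by blast
lemma E_ex: "E u v \<Longrightarrow> \<exists>j\<in>{1..m}. HE j u v" using Eunique by blast
lemma uniq: "j \<in> {1..m} \<Longrightarrow> l \<in> {1..m} \<Longrightarrow> v \<in> HV j \<Longrightarrow> v \<in> HV l \<Longrightarrow> v \<noteq> a \<Longrightarrow> j = l"
  using Hdisj by blast
lemma E_local:
  assumes "j \<in> {1..m}" "u \<in> HV j" "v \<in> HV j" shows "E u v \<longleftrightarrow> HE j u v"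
proof
  assume "HE j u v" thus "E u v" using Hsub assms(1) by blast
next
  assume e: "E u v"
  then obtain l where l: "l \<in> {1..m}" "HE j u v \<or> l \<noteq> j" "HE l u v" using E_ex by blast
  show "HE j u v"
  proof (rule ccontr)
    assume "\<not> HE j u v"
    hence "l \<noteq> j" using l by auto
    hence "u = a" "v = a" using Hdisj[OF assms(1) l(1)] HE_in[OF l(1) l(3)] assms by blast+
    thus False using e Eirr by simp
  qed
qed

definition idx :: "'a \<Rightarrow> nat" where "idx v = (THE j. j \<in> {1..m} \<and> v \<in> HV j)"

lemma idx_eq: assumes "j \<in> {1..m}" "v \<in> HV j" "v \<noteq> a" shows "idx v = j"
  unfolding idx_def using assms uniq by (intro the_equality) auto

lemma idx: assumes "v \<in> V" "v \<noteq> a" shows "idx v \<in> {1..m}" "v \<in> HV (idx v)"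
proof -
  obtain j where "j \<in> {1..m}" "v \<in> HV j" using assms Vunion by blast
  thus "idx v \<in> {1..m}" "v \<in> HV (idx v)" using idx_eq assms by auto
qed

lemma Hne: assumes "j \<in> {1..m}" shows "\<exists>w. w \<in> HV j \<and> w \<noteq> a"
  using Hdel[OF assms] unfolding connected_graph_def by blast

lemma cls_in: "j \<in> {1..m} \<Longrightarrow> cls j \<in> {1..g}" using cls_range by blast

definition f :: "nat \<Rightarrow> 'a \<Rightarrow> 'b" where
  "f j = (SOME f. bij_betw f (HV j) (GV (cls j)) \<and>
     (\<forall>x\<in>HV j. \<forall>y\<in>HV j. HE j x y \<longleftrightarrow> GE (cls j) (f x) (f y)) \<and> f a = r (cls j))"

lemma f_iso: assumes "j \<in> {1..m}" shows "iso (HV j) (HE j) (GV (cls j)) (GE (cls j)) (f j)" "f j a = r (cls j)"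
proof -
  have "\<exists>f. bij_betw f (HV j) (GV (cls j)) \<and>
     (\<forall>x\<in>HV j. \<forall>y\<in>HV j. HE j x y \<longleftrightarrow> GE (cls j) (f x) (f y)) \<and> f a = r (cls j)"
    using cls_iso[OF assms] by (simp add: rooted_iso_def)
  from someI_ex[OF this] show "iso (HV j) (HE j) (GV (cls j)) (GE (cls j)) (f j)" "f j a = r (cls j)"
    unfolding f_def[symmetric] iso_def by auto
qed

definition fi :: "nat \<Rightarrow> 'b \<Rightarrow> 'a" where "fi j = inv_into (HV j) (f j)"

lemma fi_iso: assumes "j \<in> {1..m}" shows "iso (GV (cls j)) (GE (cls j)) (HV j) (HE j) (fi j)"
  unfolding fi_def using iso_inv f_iso[OF assms] by blast

lemma fi_f: "j \<in> {1..m} \<Longrightarrow> x \<in> HV j \<Longrightarrow> fi j (f j x) = x"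
  unfolding fi_def by (rule bij_betw_inv_into_left[OF iso_bij[OF f_iso(1)]])
lemma f_fi: "j \<in> {1..m} \<Longrightarrow> x \<in> GV (cls j) \<Longrightarrow> f j (fi j x) = x"
  unfolding fi_def by (rule bij_betw_inv_into_right[OF iso_bij[OF f_iso(1)]])
lemma fi_r: "j \<in> {1..m} \<Longrightarrow> fi j (r (cls j)) = a"
proof -
  assume j: "j \<in> {1..m}"
  have "fi j (f j a) = a" using fi_f[OF j a_in[OF j]] .
  thus ?thesis using f_iso(2)[OF j] by simp
qed
lemma fi_in: "j \<in> {1..m} \<Longrightarrow> x \<in> GV (cls j) \<Longrightarrow> fi j x \<in> HV j"
  by (rule iso_in[OF fi_iso])
lemma f_in: "j \<in> {1..m} \<Longrightarrow> x \<in> HV j \<Longrightarrow> f j x \<in> GV (cls j)"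
  by (rule iso_in[OF f_iso(1)])
lemma fi_a: "j \<in> {1..m} \<Longrightarrow> x \<in> GV (cls j) \<Longrightarrow> fi j x = a \<longleftrightarrow> x = r (cls j)"
proof -
  assume j: "j \<in> {1..m}" and x: "x \<in> GV (cls j)"
  show ?thesis
  proof
    assume "fi j x = a"
    hence "f j (fi j x) = f j a" by simp
    thus "x = r (cls j)" using f_fi[OF j x] f_iso(2)[OF j] by simp
  qed (simp add: fi_r[OF j])
qed
lemma r_in: "j \<in> {1..m} \<Longrightarrow> r (cls j) \<in> GV (cls j)"
  using Gi cls_in by blast

abbreviation "\<Gamma>i i \<equiv> aut_fix (GV i) (GE i) (r i)"


lemma Vcover: "v \<in> V \<Longrightarrow> \<exists>j\<in>{1..m}. v \<in> HV j" using Vunion by blast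

lemma iso_E: assumes j: "j \<in> {1..m}" and l: "l \<in> {1..m}" and p: "iso (HV j) (HE j) (HV l) (HE l) p"
  and u: "u \<in> HV j" and v: "v \<in> HV j" shows "E u v \<longleftrightarrow> E (p u) (p v)"
  using E_local[OF j u v] E_local[OF l iso_in[OF p u] iso_in[OF p v]] iso_adj[OF p u v] by simp

lemma construct:
  assumes \<sigma>: "bij_betw \<sigma> {1..m} {1..m}" "\<forall>j\<in>{1..m}. cls (\<sigma> j) = cls j"
    and \<tau>: "\<forall>j\<in>{1..m}. \<tau> j \<in> \<Gamma>i (cls j)"
  defines "\<pi> \<equiv> \<lambda>v. if v \<in> V - {a} then fi (\<sigma> (idx v)) (\<tau> (idx v) (f (idx v) v)) else v"
  shows "\<pi> \<in> aut_fix V E a" "\<forall>j\<in>{1..m}. \<forall>x\<in>GV (cls j). \<pi> (fi j x) = fi (\<sigma> j) (\<tau> j x)"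
proof -
  define p where "p j = fi (\<sigma> j) \<circ> \<tau> j \<circ> f j" for j
  have sj: "\<sigma> j \<in> {1..m}" if "j \<in> {1..m}" for j using \<sigma>(1) that bij_betwE by blast
  have tiso: "iso (GV (cls j)) (GE (cls j)) (GV (cls j)) (GE (cls j)) (\<tau> j)" if "j \<in> {1..m}" for j
    using \<tau> that by (auto simp: aut_fix_def aut_iso)
  have tr: "\<tau> j (r (cls j)) = r (cls j)" if "j \<in> {1..m}" for j
    using \<tau> that by (auto simp: aut_fix_def)
  have piso: "iso (HV j) (HE j) (HV (\<sigma> j)) (HE (\<sigma> j)) (p j)" if j: "j \<in> {1..m}" for j
  proof -
    have "iso (GV (cls j)) (GE (cls j)) (HV (\<sigma> j)) (HE (\<sigma> j)) (fi (\<sigma> j))"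
      using fi_iso[OF sj[OF j]] \<sigma>(2) j by simp
    from iso_comp[OF iso_comp[OF f_iso(1)[OF j] tiso[OF j]] this]
    show ?thesis unfolding p_def by (simp add: comp_assoc)
  qed
  have pa: "p j a = a" if j: "j \<in> {1..m}" for j
    using f_iso(2)[OF j] tr[OF j] fi_r[OF sj[OF j]] \<sigma>(2) j by (simp add: p_def)
  have \<pi>p: "\<pi> v = p j v" if j: "j \<in> {1..m}" and v: "v \<in> HV j" for j v
  proof (cases "v = a")
    case True thus ?thesis using pa[OF j] by (simp add: \<pi>_def)
  next
    case False
    hence "idx v = j" using idx_eq j v by blast
    thus ?thesis using False v HV_sub[OF j] by (auto simp: \<pi>_def p_def)
  qed
  have \<pi>a: "\<pi> a = a" by (simp add: \<pi>_def)
  have \<pi>out: "\<pi> v = v" if "v \<notin> V" for v using that by (simp add: \<pi>_def)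
  have \<pi>in: "\<pi> v \<in> HV (\<sigma> j)" if j: "j \<in> {1..m}" and v: "v \<in> HV j" for j v
    using \<pi>p[OF j v] iso_in[OF piso[OF j] v] by simp
  have \<pi>na: "\<pi> v \<noteq> a" if j: "j \<in> {1..m}" and v: "v \<in> HV j" "v \<noteq> a" for j v
  proof
    assume "\<pi> v = a"
    hence "p j v = p j a" using \<pi>p[OF j v(1)] pa[OF j] by simp
    thus False using iso_inj[OF piso[OF j] v(1) a_in[OF j]] v(2) by simp
  qed
  show "\<forall>j\<in>{1..m}. \<forall>x\<in>GV (cls j). \<pi> (fi j x) = fi (\<sigma> j) (\<tau> j x)"
    using \<pi>p fi_in f_fi by (simp add: p_def)
  have inj: "inj_on \<pi> V"
  proof
    fix u v assume u: "u \<in> V" and v: "v \<in> V" and e: "\<pi> u = \<pi> v"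
    show "u = v"
    proof (cases "u = a \<or> v = a")
      case True
      thus ?thesis using e \<pi>a \<pi>na idx u v by metis
    next
      case False
      hence ua: "u \<noteq> a" and va: "v \<noteq> a" by auto
      let ?ju = "idx u" and ?jv = "idx v"
      have ju: "?ju \<in> {1..m}" "u \<in> HV ?ju" and jv: "?jv \<in> {1..m}" "v \<in> HV ?jv"
        using idx u v ua va by auto
      have "\<pi> u \<in> HV (\<sigma> ?ju)" "\<pi> v \<in> HV (\<sigma> ?jv)" "\<pi> u \<noteq> a"
        using \<pi>in ju jv \<pi>na ua by auto
      hence "\<sigma> ?ju = \<sigma> ?jv" using uniq sj ju jv e by metis
      hence "?ju = ?jv" using \<sigma>(1) ju jv by (metis bij_betw_def inj_onD)
      hence "p ?ju u = p ?ju v" using e \<pi>p ju jv by metis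
      thus ?thesis using iso_inj[OF piso[OF ju(1)] ju(2)] jv \<open>?ju = ?jv\<close> by metis
    qed
  qed
  have sub: "\<pi> ` V \<subseteq> V"
  proof
    fix w assume "w \<in> \<pi> ` V"
    then obtain v where v: "v \<in> V" "w = \<pi> v" by blast
    then obtain j where j: "j \<in> {1..m}" "v \<in> HV j" using Vcover by blast
    thus "w \<in> V" using \<pi>in[OF j] HV_sub sj[OF j(1)] v by blast
  qed
  have bij: "bij_betw \<pi> V V" using endo_inj_surj[OF finV sub inj] inj by (simp add: bij_betw_def)
  have adj: "E u v \<longleftrightarrow> E (\<pi> u) (\<pi> v)" if u: "u \<in> V" and v: "v \<in> V" for u v
  proof (cases "\<exists>j\<in>{1..m}. u \<in> HV j \<and> v \<in> HV j")
    case True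
    then obtain j where j: "j \<in> {1..m}" "u \<in> HV j" "v \<in> HV j" by blast
    show ?thesis using iso_E[OF j(1) sj[OF j(1)] piso[OF j(1)] j(2) j(3)] \<pi>p j by simp
  next
    case False
    have ne: "\<not> E u v" using False E_ex HE_in by metis
    have ua: "u \<noteq> a" using False a_in Vcover[OF v] by blast
    have va: "v \<noteq> a" using False a_in Vcover[OF u] by blast
    have ju: "idx u \<in> {1..m}" "u \<in> HV (idx u)" and jv: "idx v \<in> {1..m}" "v \<in> HV (idx v)"
      using idx u v ua va by auto
    have "\<not> E (\<pi> u) (\<pi> v)"
    proof
      assume "E (\<pi> u) (\<pi> v)"
      then obtain l where l: "l \<in> {1..m}" "\<pi> u \<in> HV l" "\<pi> v \<in> HV l" using E_ex HE_in by metis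
      have "\<pi> u \<in> HV (\<sigma> (idx u))" "\<pi> v \<in> HV (\<sigma> (idx v))" "\<pi> u \<noteq> a" "\<pi> v \<noteq> a"
        using \<pi>in \<pi>na ju jv ua va by auto
      hence "l = \<sigma> (idx u)" "l = \<sigma> (idx v)" using uniq l sj ju jv by metis+
      hence "idx u = idx v" using \<sigma>(1) ju jv by (metis bij_betw_def inj_onD)
      thus False using False ju jv by metis
    qed
    thus ?thesis using ne by simp
  qed
  show "\<pi> \<in> aut_fix V E a" using bij adj \<pi>out \<pi>a by (auto simp: aut_fix_def aut_def)
qed


lemma autf_na: assumes "\<pi> \<in> aut_fix W F c" "v \<noteq> c" shows "\<pi> v \<noteq> c"
proof
  have pa: "\<pi> \<in> aut W F" "\<pi> c = c" using assms(1) by (auto simp: aut_fix_def)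
  assume "\<pi> v = c" hence "\<pi> v = \<pi> c" using pa(2) by simp
  from aut_inj[OF pa(1) this] show False using assms(2) by simp
qed

definition reach :: "'a \<Rightarrow> 'a \<Rightarrow> bool" where
  "reach = (\<lambda>u v. u \<in> V - {a} \<and> v \<in> V - {a} \<and> E u v)\<^sup>*\<^sup>*"

lemma reach_in: assumes "reach u v" "j \<in> {1..m}" "u \<in> HV j - {a}" shows "v \<in> HV j - {a}"
  using assms(1,3) unfolding reach_def
proof (induction rule: rtranclp_induct)
  case base thus ?case .
next
  case (step y z)
  hence y: "y \<in> HV j - {a}" and e: "E y z" and z: "z \<in> V - {a}" by auto
  obtain l where l: "l \<in> {1..m}" "HE l y z" using E_ex[OF e] by blast
  have "y \<in> HV l" "z \<in> HV l" using HE_in[OF l] by auto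
  hence "l = j" using uniq[OF l(1) assms(2)] y by blast
  thus ?case using \<open>z \<in> HV l\<close> z by blast
qed

lemma reach_local: assumes j: "j \<in> {1..m}" and u: "u \<in> HV j - {a}" and v: "v \<in> HV j - {a}"
  shows "reach u v"
proof -
  have "(\<lambda>u v. u \<in> HV j - {a} \<and> v \<in> HV j - {a} \<and> (u \<noteq> a \<and> v \<noteq> a \<and> HE j u v))\<^sup>*\<^sup>* u v"
    using Hdel[OF j] u v unfolding connected_graph_def by blast
  thus ?thesis unfolding reach_def
  proof (rule mono_rtranclp[rule_format, rotated])
    fix x y assume "x \<in> HV j - {a} \<and> y \<in> HV j - {a} \<and> (x \<noteq> a \<and> y \<noteq> a \<and> HE j x y)"
    thus "x \<in> V - {a} \<and> y \<in> V - {a} \<and> E x y" using HV_sub[OF j] Hsub[OF j] by blast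
  qed
qed

lemma reach_aut: assumes p: "\<pi> \<in> aut_fix V E a" and "reach u v" shows "reach (\<pi> u) (\<pi> v)"
  using assms(2) unfolding reach_def
proof (induction rule: rtranclp_induct)
  case base thus ?case by simp
next
  case (step y z)
  have pa: "\<pi> \<in> aut V E" "\<pi> a = a" using p by (auto simp: aut_fix_def)
  have yz: "y \<in> V" "y \<noteq> a" "z \<in> V" "z \<noteq> a" "E y z" using step by auto
  have "\<pi> y \<in> V" "\<pi> z \<in> V" using aut_in[OF pa(1)] yz by auto
  moreover have "\<pi> y \<noteq> a" "\<pi> z \<noteq> a" using autf_na[OF p] yz by auto
  moreover have "E (\<pi> y) (\<pi> z)" using aut_adj[OF pa(1) yz(1) yz(3)] yz(5) by blast
  ultimately have "(\<lambda>u v. u \<in> V - {a} \<and> v \<in> V - {a} \<and> E u v) (\<pi> y) (\<pi> z)" by simp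
  from rtranclp.rtrancl_into_rtrancl[OF step.IH this] show ?case .
qed

lemma comp_map:
  assumes p: "\<pi> \<in> aut_fix V E a" and j: "j \<in> {1..m}" and l: "l \<in> {1..m}"
    and w: "w \<in> HV j - {a}" and pw: "\<pi> w \<in> HV l"
  shows "\<pi> ` (HV j - {a}) \<subseteq> HV l - {a}"
proof
  have pa: "\<pi> \<in> aut V E" "\<pi> a = a" using p by (auto simp: aut_fix_def)
  have "\<pi> w \<noteq> a" using autf_na[OF p] w by blast
  fix y assume "y \<in> \<pi> ` (HV j - {a})"
  then obtain x where x: "x \<in> HV j - {a}" "y = \<pi> x" by blast
  have "reach (\<pi> w) (\<pi> x)" using reach_aut[OF p reach_local[OF j w x(1)]] .
  thus "y \<in> HV l - {a}" using reach_in[OF _ l] pw \<open>\<pi> w \<noteq> a\<close> x(2) by blast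
qed

lemma comp_eq:
  assumes p: "\<pi> \<in> aut_fix V E a" and j: "j \<in> {1..m}"
  shows "\<exists>l\<in>{1..m}. \<pi> ` HV j = HV l"
proof -
  have pa: "\<pi> \<in> aut V E" "\<pi> a = a" using p by (auto simp: aut_fix_def)
  obtain w where w: "w \<in> HV j" "w \<noteq> a" using Hne[OF j] by blast
  have "\<pi> w \<in> V" using aut_in[OF pa(1)] w HV_sub[OF j] by blast
  moreover have "\<pi> w \<noteq> a" using autf_na[OF p] w by blast
  ultimately have l: "idx (\<pi> w) \<in> {1..m}" "\<pi> w \<in> HV (idx (\<pi> w))" using idx by auto
  define l where "l = idx (\<pi> w)"
  have A: "\<pi> ` (HV j - {a}) \<subseteq> HV l - {a}" using comp_map[OF p j l(1)] w l(2) by (simp add: l_def)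
  have p': "inv \<pi> \<in> aut_fix V E a" using autf_inv[OF p] .
  have B: "inv \<pi> ` (HV l - {a}) \<subseteq> HV j - {a}"
    using comp_map[OF p' l(1)[folded l_def] j] l(2)[folded l_def] \<open>\<pi> w \<noteq> a\<close> aut_inv(2)[OF pa(1)] w
    by simp
  have "HV l - {a} \<subseteq> \<pi> ` (HV j - {a})"
  proof
    fix y assume y: "y \<in> HV l - {a}"
    hence "inv \<pi> y \<in> HV j - {a}" using B by blast
    moreover have "y = \<pi> (inv \<pi> y)" using aut_inv(3)[OF pa(1)] by simp
    ultimately show "y \<in> \<pi> ` (HV j - {a})" by blast
  qed
  hence C: "\<pi> ` (HV j - {a}) = HV l - {a}" using A by blast
  have "\<pi> ` HV j = insert (\<pi> a) (\<pi> ` (HV j - {a}))" using a_in[OF j] by blast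
  also have "\<dots> = insert a (HV l - {a})" using C pa(2) by simp
  also have "\<dots> = HV l" using a_in l(1) unfolding l_def by blast
  finally have "\<pi> ` HV j = HV l" .
  thus ?thesis using l(1) l_def by blast
qed

lemma decompose:
  assumes p: "\<pi> \<in> aut_fix V E a"
  shows "\<exists>\<sigma> \<tau>. \<forall>j\<in>{1..m}. \<sigma> j \<in> {1..m} \<and> cls (\<sigma> j) = cls j \<and> \<tau> j \<in> \<Gamma>i (cls j) \<and>
            (\<forall>x\<in>GV (cls j). \<pi> (fi j x) = fi (\<sigma> j) (\<tau> j x))"
proof -
  have pa: "\<pi> \<in> aut V E" "\<pi> a = a" using p by (auto simp: aut_fix_def)
  have "\<forall>j\<in>{1..m}. \<exists>lt. fst lt \<in> {1..m} \<and> cls (fst lt) = cls j \<and> snd lt \<in> \<Gamma>i (cls j) \<and>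
            (\<forall>x\<in>GV (cls j). \<pi> (fi j x) = fi (fst lt) (snd lt x))"
  proof
    fix j assume j: "j \<in> {1..m}"
    obtain l where l: "l \<in> {1..m}" "\<pi> ` HV j = HV l" using comp_eq[OF p j] by blast
    have inj: "inj_on \<pi> (HV j)" using aut_inj[OF pa(1)] by (meson inj_onI)
    have piso: "iso (HV j) (HE j) (HV l) (HE l) \<pi>"
    proof -
      have "HE j x y \<longleftrightarrow> HE l (\<pi> x) (\<pi> y)" if "x \<in> HV j" "y \<in> HV j" for x y
      proof -
        have "\<pi> x \<in> HV l" "\<pi> y \<in> HV l" using l(2) that by auto
        thus ?thesis using E_local[OF j that] E_local[OF l(1)] aut_adj[OF pa(1)] that HV_sub[OF j] by blast
      qed
      thus ?thesis using inj l(2) by (auto simp: iso_def bij_betw_def)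
    qed
    have "rooted_iso (HV j) (HE j) a (HV l) (HE l) a" using piso pa(2) unfolding rooted_iso_def iso_def by blast
    hence cl: "cls l = cls j" using cls_equiv[OF j l(1)] by simp
    define t where "t x = (if x \<in> GV (cls j) then f l (\<pi> (fi j x)) else x)" for x
    have "iso (GV (cls j)) (GE (cls j)) (GV (cls j)) (GE (cls j)) (f l \<circ> (\<pi> \<circ> fi j))"
      using iso_comp[OF iso_comp[OF fi_iso[OF j] piso] f_iso(1)[OF l(1)]] cl by simp
    hence tiso: "iso (GV (cls j)) (GE (cls j)) (GV (cls j)) (GE (cls j)) t"
      using iso_cong[of "GV (cls j)" t "f l \<circ> (\<pi> \<circ> fi j)"] by (simp add: t_def)
    have "t (r (cls j)) = r (cls j)"
      using r_in[OF j] fi_r[OF j] pa(2) f_iso(2)[OF l(1)] cl by (simp add: t_def)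
    hence tG: "t \<in> \<Gamma>i (cls j)" using tiso by (auto simp: aut_fix_def aut_iso t_def)
    have "\<pi> (fi j x) = fi l (t x)" if x: "x \<in> GV (cls j)" for x
    proof -
      have "\<pi> (fi j x) \<in> HV l" using l(2) fi_in[OF j x] by blast
      thus ?thesis using fi_f[OF l(1)] x by (simp add: t_def)
    qed
    thus "\<exists>lt. fst lt \<in> {1..m} \<and> cls (fst lt) = cls j \<and> snd lt \<in> \<Gamma>i (cls j) \<and>
            (\<forall>x\<in>GV (cls j). \<pi> (fi j x) = fi (fst lt) (snd lt x))"
      using l(1) cl tG by (intro exI[of _ "(l, t)"]) auto
  qed
  from bchoice[OF this] obtain h where h: "\<forall>j\<in>{1..m}. fst (h j) \<in> {1..m} \<and> cls (fst (h j)) = cls j \<and> snd (h j) \<in> \<Gamma>i (cls j) \<and>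
            (\<forall>x\<in>GV (cls j). \<pi> (fi j x) = fi (fst (h j)) (snd (h j) x))"
    ..
  show ?thesis using h by (intro exI[of _ "\<lambda>j. fst (h j)"] exI[of _ "\<lambda>j. snd (h j)"]) blast
qed

end


context cfg
begin

abbreviation "\<Gamma>G \<equiv> aut_fix V E a"
abbreviation "dG \<equiv> dist_labelings V \<Gamma>G k"
abbreviation "di i \<equiv> dist_labelings (GV i) (\<Gamma>i i) k"
abbreviation "cli i \<equiv> cl (GV i) (\<Gamma>i i) k"
abbreviation "eqi i \<equiv> lab_equiv (GV i) (\<Gamma>i i)"

definition loc :: "('a \<Rightarrow> nat) \<Rightarrow> nat \<Rightarrow> 'b \<Rightarrow> nat" where
  "loc \<phi> j = restrict (\<phi> \<circ> fi j) (GV (cls j))"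

lemma construct_ex:
  assumes "bij_betw \<sigma> {1..m} {1..m}" "\<forall>j\<in>{1..m}. cls (\<sigma> j) = cls j"
    and "\<forall>j\<in>{1..m}. \<tau> j \<in> \<Gamma>i (cls j)"
  shows "\<exists>\<pi>\<in>\<Gamma>G. \<forall>j\<in>{1..m}. \<forall>x\<in>GV (cls j). \<pi> (fi j x) = fi (\<sigma> j) (\<tau> j x)"
proof -
  let ?\<pi> = "\<lambda>v. if v \<in> V - {a} then fi (\<sigma> (idx v)) (\<tau> (idx v) (f (idx v) v)) else v"
  show ?thesis
  proof (rule bexI[of _ ?\<pi>])
    show "?\<pi> \<in> \<Gamma>G" by (rule construct(1)[OF assms])
    show "\<forall>j\<in>{1..m}. \<forall>x\<in>GV (cls j). ?\<pi> (fi j x) = fi (\<sigma> j) (\<tau> j x)"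
      by (rule construct(2)[OF assms])
  qed
qed

lemma fi_cover: assumes "v \<in> V" shows "\<exists>j\<in>{1..m}. \<exists>x\<in>GV (cls j). v = fi j x"
proof -
  obtain j where j: "j \<in> {1..m}" "v \<in> HV j" using Vcover[OF assms] by blast
  have "v = fi j (f j v)" using fi_f[OF j] by simp
  thus ?thesis using j f_in[OF j] by blast
qed

lemma pres:
  assumes "\<forall>j\<in>{1..m}. \<forall>x\<in>GV (cls j). \<psi> (\<pi> (fi j x)) = \<phi> (fi j x)"
  shows "\<forall>v\<in>V. \<psi> (\<pi> v) = \<phi> v"
proof
  fix v assume "v \<in> V"
  then obtain j x where "j \<in> {1..m}" "x \<in> GV (cls j)" "v = fi j x" using fi_cover by blast
  thus "\<psi> (\<pi> v) = \<phi> v" using assms by simp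
qed

lemma ident:
  assumes p: "\<pi> \<in> \<Gamma>G" and "\<forall>j\<in>{1..m}. \<forall>x\<in>GV (cls j). \<pi> (fi j x) = fi j x"
  shows "\<pi> = id"
proof
  fix v show "\<pi> v = id v"
  proof (cases "v \<in> V")
    case True
    then obtain j x where "j \<in> {1..m}" "x \<in> GV (cls j)" "v = fi j x" using fi_cover by blast
    thus ?thesis using assms(2) by simp
  next
    case False thus ?thesis using p by (auto simp: aut_fix_def aut_def)
  qed
qed

lemma dG_id: "\<phi> \<in> dG \<Longrightarrow> \<pi> \<in> \<Gamma>G \<Longrightarrow> \<forall>v\<in>V. \<phi> (\<pi> v) = \<phi> v \<Longrightarrow> \<pi> = id"
  by (auto simp: dist_labelings_def)

lemma di_id: "\<psi> \<in> di i \<Longrightarrow> \<tau> \<in> \<Gamma>i i \<Longrightarrow> \<forall>x\<in>GV i. \<psi> (\<tau> x) = \<psi> x \<Longrightarrow> \<tau> = id"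
  by (auto simp: dist_labelings_def)

lemma loc_app: "x \<in> GV (cls j) \<Longrightarrow> loc \<phi> j x = \<phi> (fi j x)"
  by (simp add: loc_def)

lemma loc_r: "j \<in> {1..m} \<Longrightarrow> loc \<phi> j (r (cls j)) = \<phi> a"
  using r_in fi_r by (simp add: loc_def)

lemma loc_PiE: assumes "\<phi> \<in> V \<rightarrow>\<^sub>E {1..k}" "j \<in> {1..m}" shows "loc \<phi> j \<in> GV (cls j) \<rightarrow>\<^sub>E {1..k}"
proof -
  have "\<phi> (fi j x) \<in> {1..k}" if "x \<in> GV (cls j)" for x
    using assms fi_in[OF assms(2) that] HV_sub[OF assms(2)] by (auto simp: PiE_def Pi_def)
  thus ?thesis by (auto simp: loc_def)
qed

lemma Gi_in: "\<tau> \<in> \<Gamma>i i \<Longrightarrow> x \<in> GV i \<Longrightarrow> \<tau> x \<in> GV i"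
  using aut_in by (auto simp: aut_fix_def)

lemma loc_dist:
  assumes phi: "\<phi> \<in> dG" and j: "j \<in> {1..m}"
  shows "loc \<phi> j \<in> di (cls j)"
proof -
  have "\<tau> = id" if t: "\<tau> \<in> \<Gamma>i (cls j)" and tp: "\<forall>x\<in>GV (cls j). loc \<phi> j (\<tau> x) = loc \<phi> j x" for \<tau>
  proof -
    define \<tau>' where "\<tau>' l = (if l = j then \<tau> else id)" for l
    have "\<forall>l\<in>{1..m}. \<tau>' l \<in> \<Gamma>i (cls l)" using t autf_id by (auto simp: \<tau>'_def)
    then obtain \<pi> where p: "\<pi> \<in> \<Gamma>G" and pe: "\<forall>l\<in>{1..m}. \<forall>x\<in>GV (cls l). \<pi> (fi l x) = fi l (\<tau>' l x)"
      using construct_ex[of id \<tau>'] by auto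
    have "\<forall>l\<in>{1..m}. \<forall>x\<in>GV (cls l). \<phi> (\<pi> (fi l x)) = \<phi> (fi l x)"
    proof (intro ballI)
      fix l x assume l: "l \<in> {1..m}" and x: "x \<in> GV (cls l)"
      show "\<phi> (\<pi> (fi l x)) = \<phi> (fi l x)"
      proof (cases "l = j")
        case True
        hence "\<phi> (\<pi> (fi l x)) = loc \<phi> j (\<tau> x)" using pe l x Gi_in[OF t] by (simp add: \<tau>'_def loc_app)
        also have "\<dots> = loc \<phi> j x" using tp x True by simp
        finally show ?thesis using x True by (simp add: loc_app)
      next
        case False
        have "\<pi> (fi l x) = fi l x" using pe l x False by (simp add: \<tau>'_def)
        thus ?thesis by simp
      qed
    qed
    hence "\<pi> = id" using dG_id[OF phi p] pres by blast
    hence "fi j (\<tau> x) = fi j x" if "x \<in> GV (cls j)" for x using pe j that by (simp add: \<tau>'_def)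
    hence "\<tau> x = x" if "x \<in> GV (cls j)" for x
      using iso_inj[OF fi_iso[OF j]] Gi_in[OF t] that by blast
    moreover have "\<tau> x = x" if "x \<notin> GV (cls j)" for x using t that by (auto simp: aut_fix_def aut_def)
    ultimately show "\<tau> = id" by (metis eq_id_iff)
  qed
  moreover have "loc \<phi> j \<in> GV (cls j) \<rightarrow>\<^sub>E {1..k}" using loc_PiE phi j by (auto simp: dist_labelings_def)
  ultimately show ?thesis by (auto simp: dist_labelings_def)
qed

lemma loc_ineq:
  assumes phi: "\<phi> \<in> dG" and j: "j \<in> {1..m}" and l: "l \<in> {1..m}" and jl: "j \<noteq> l" and c: "cls j = cls l"
  shows "\<not> eqi (cls j) (loc \<phi> j) (loc \<phi> l)"
proof
  assume "eqi (cls j) (loc \<phi> j) (loc \<phi> l)"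
  then obtain \<tau> where t: "\<tau> \<in> \<Gamma>i (cls j)" and tp: "\<forall>x\<in>GV (cls j). loc \<phi> l (\<tau> x) = loc \<phi> j x"
    by (auto simp: lab_equiv_def)
  have ta: "\<tau> \<in> aut (GV (cls j)) (GE (cls j))" using t by (simp add: aut_fix_def)
  define \<sigma> where "\<sigma> n = (if n = j then l else if n = l then j else n)" for n
  define \<tau>' where "\<tau>' n = (if n = j then \<tau> else if n = l then inv \<tau> else id)" for n
  have sb: "bij_betw \<sigma> {1..m} {1..m}"
    by (rule bij_betw_byWitness[where f'=\<sigma>]) (use j l in \<open>auto simp: \<sigma>_def\<close>)
  have sc: "\<forall>n\<in>{1..m}. cls (\<sigma> n) = cls n" using c by (simp add: \<sigma>_def)
  have "\<forall>n\<in>{1..m}. \<tau>' n \<in> \<Gamma>i (cls n)" using t autf_inv[OF t] autf_id c by (auto simp: \<tau>'_def)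
  then obtain \<pi> where p: "\<pi> \<in> \<Gamma>G" and pe: "\<forall>n\<in>{1..m}. \<forall>x\<in>GV (cls n). \<pi> (fi n x) = fi (\<sigma> n) (\<tau>' n x)"
    using construct_ex[OF sb sc] by blast
  have "\<forall>n\<in>{1..m}. \<forall>x\<in>GV (cls n). \<phi> (\<pi> (fi n x)) = \<phi> (fi n x)"
  proof (intro ballI)
    fix n x assume n: "n \<in> {1..m}" and x: "x \<in> GV (cls n)"
    show "\<phi> (\<pi> (fi n x)) = \<phi> (fi n x)"
    proof (cases "n = j")
      case True
      hence "\<phi> (\<pi> (fi n x)) = \<phi> (fi l (\<tau> x))" using pe n x by (simp add: \<sigma>_def \<tau>'_def)
      also have "\<dots> = loc \<phi> l (\<tau> x)" using Gi_in[OF t] x True c by (simp add: loc_app)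
      also have "\<dots> = loc \<phi> j x" using tp x True by simp
      finally show ?thesis using x True by (simp add: loc_app)
    next
      case nj: False
      show ?thesis
      proof (cases "n = l")
        case True
        have x': "x \<in> GV (cls j)" using x True c by simp
        have ix: "inv \<tau> x \<in> GV (cls j)" using aut_in[OF aut_inv(1)[OF ta] x'] .
        have "\<phi> (\<pi> (fi n x)) = \<phi> (fi j (inv \<tau> x))" using pe n x True jl by (simp add: \<sigma>_def \<tau>'_def)
        also have "\<dots> = loc \<phi> j (inv \<tau> x)" using ix by (simp add: loc_app)
        also have "\<dots> = loc \<phi> l (\<tau> (inv \<tau> x))" using tp ix by simp
        also have "\<dots> = loc \<phi> l x" using aut_inv(3)[OF ta] by simp
        finally show ?thesis using x True by (simp add: loc_app)
      next
        case False
        thus ?thesis using pe n x nj by (simp add: \<sigma>_def \<tau>'_def)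
      qed
    qed
  qed
  hence pid: "\<pi> = id" using dG_id[OF phi p] pres by blast
  obtain w where w: "w \<in> HV j" "w \<noteq> a" using Hne[OF j] by blast
  have "w = fi j (f j w)" using fi_f[OF j w(1)] by simp
  hence "w = fi l (\<tau> (f j w))" using pe j f_in[OF j w(1)] pid by (simp add: \<sigma>_def \<tau>'_def)
  moreover have "fi l (\<tau> (f j w)) \<in> HV l" using fi_in[OF l] Gi_in[OF t f_in[OF j w(1)]] c by simp
  ultimately have "w \<in> HV l" by simp
  thus False using uniq[OF j l w(1)] w(2) jl by blast
qed


definition cset :: "('a \<Rightarrow> nat) \<Rightarrow> nat \<Rightarrow> ('b \<Rightarrow> nat) set set" where
  "cset \<phi> i = (\<lambda>j. cli i (loc \<phi> j)) ` {j \<in> {1..m}. cls j = i}"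
definition Inv :: "('a \<Rightarrow> nat) \<Rightarrow> nat \<times> (nat \<Rightarrow> ('b \<Rightarrow> nat) set set)" where
  "Inv \<phi> = (\<phi> a, \<lambda>i\<in>{1..g}. cset \<phi> i)"
definition Ci :: "nat \<Rightarrow> nat \<Rightarrow> ('b \<Rightarrow> nat) set set" where
  "Ci i c = cli i ` {\<psi> \<in> di i. \<psi> (r i) = c}"
definition mc :: "nat \<Rightarrow> nat" where "mc i = card {j \<in> {1..m}. cls j = i}"
definition TT where "TT = Sigma {1..k} (\<lambda>c. PiE {1..g} (\<lambda>i. {X. X \<subseteq> Ci i c \<and> card X = mc i}))"

lemma cl_loc_iff:
  assumes "\<phi> \<in> dG" "\<psi> \<in> dG" "j \<in> {1..m}" "l \<in> {1..m}" "cls l = cls j"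
  shows "cli (cls j) (loc \<phi> j) = cli (cls j) (loc \<psi> l) \<longleftrightarrow> eqi (cls j) (loc \<phi> j) (loc \<psi> l)"
  using cl_eq_iff[of "loc \<phi> j" "GV (cls j)" "GE (cls j)" "r (cls j)" k "loc \<psi> l"]
    loc_dist[OF assms(1,3)] loc_dist[OF assms(2,4)] assms(5) by simp

lemma Inv_T:
  assumes phi: "\<phi> \<in> dG" shows "Inv \<phi> \<in> TT"
proof -
  have \<phi>a: "\<phi> a \<in> {1..k}" using phi aV by (auto simp: dist_labelings_def PiE_def Pi_def)
  have "cset \<phi> i \<subseteq> Ci i (\<phi> a) \<and> card (cset \<phi> i) = mc i" if i: "i \<in> {1..g}" for i
  proof
    show "cset \<phi> i \<subseteq> Ci i (\<phi> a)"
    proof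
      fix X assume "X \<in> cset \<phi> i"
      then obtain j where j: "j \<in> {1..m}" "cls j = i" "X = cli i (loc \<phi> j)" by (auto simp: cset_def)
      thus "X \<in> Ci i (\<phi> a)" using loc_dist[OF phi j(1)] loc_r[OF j(1)] by (auto simp: Ci_def)
    qed
    have "inj_on (\<lambda>j. cli i (loc \<phi> j)) {j \<in> {1..m}. cls j = i}"
    proof (rule inj_onI)
      fix j l assume j: "j \<in> {j\<in>{1..m}. cls j = i}" and l: "l \<in> {j\<in>{1..m}. cls j = i}"
        and e: "cli i (loc \<phi> j) = cli i (loc \<phi> l)"
      have "eqi (cls j) (loc \<phi> j) (loc \<phi> l)" using e cl_loc_iff[OF phi phi] j l by auto
      thus "j = l" using loc_ineq[OF phi, of j l] j l by auto
    qed
    thus "card (cset \<phi> i) = mc i" by (simp add: cset_def mc_def card_image)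
  qed
  thus ?thesis using \<phi>a by (auto simp: Inv_def TT_def)
qed

lemma transfer:
  assumes p: "\<pi> \<in> \<Gamma>G" and e: "\<forall>v\<in>V. \<psi> (\<pi> v) = \<phi> v" and j: "j \<in> {1..m}"
    and s: "\<sigma> j \<in> {1..m}" "cls (\<sigma> j) = cls j" and t: "\<tau> j \<in> \<Gamma>i (cls j)"
    and pe: "\<forall>x\<in>GV (cls j). \<pi> (fi j x) = fi (\<sigma> j) (\<tau> j x)"
  shows "eqi (cls j) (loc \<phi> j) (loc \<psi> (\<sigma> j))"
proof -
  have "\<forall>x\<in>GV (cls j). loc \<psi> (\<sigma> j) (\<tau> j x) = loc \<phi> j x"
  proof
    fix x assume x: "x \<in> GV (cls j)"
    have "loc \<psi> (\<sigma> j) (\<tau> j x) = \<psi> (fi (\<sigma> j) (\<tau> j x))" using Gi_in[OF t x] s(2) by (simp add: loc_app)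
    also have "\<dots> = \<psi> (\<pi> (fi j x))" using pe x by simp
    also have "\<dots> = \<phi> (fi j x)" using e fi_in[OF j x] HV_sub[OF j] by auto
    also have "\<dots> = loc \<phi> j x" using x by (simp add: loc_app)
    finally show "loc \<psi> (\<sigma> j) (\<tau> j x) = loc \<phi> j x" .
  qed
  thus ?thesis using t by (auto simp: lab_equiv_def)
qed

lemma cset_sub:
  assumes phi: "\<phi> \<in> dG" and psi: "\<psi> \<in> dG" and eq: "lab_equiv V \<Gamma>G \<phi> \<psi>"
  shows "cset \<phi> i \<subseteq> cset \<psi> i"
proof
  obtain \<pi> where p: "\<pi> \<in> \<Gamma>G" and e: "\<forall>v\<in>V. \<psi> (\<pi> v) = \<phi> v" using eq by (auto simp: lab_equiv_def)
  obtain \<sigma> \<tau> where d: "\<forall>j\<in>{1..m}. \<sigma> j \<in> {1..m} \<and> cls (\<sigma> j) = cls j \<and> \<tau> j \<in> \<Gamma>i (cls j) \<and>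
            (\<forall>x\<in>GV (cls j). \<pi> (fi j x) = fi (\<sigma> j) (\<tau> j x))" using decompose[OF p] by blast
  fix X assume "X \<in> cset \<phi> i"
  then obtain j where j: "j \<in> {1..m}" "cls j = i" "X = cli i (loc \<phi> j)" by (auto simp: cset_def)
  have "eqi (cls j) (loc \<phi> j) (loc \<psi> (\<sigma> j))" using transfer[OF p e j(1)] d j(1) by blast
  hence "cli (cls j) (loc \<phi> j) = cli (cls j) (loc \<psi> (\<sigma> j))" using cl_loc_iff[OF phi psi j(1)] d j(1) by blast
  thus "X \<in> cset \<psi> i" using d j unfolding cset_def by (intro image_eqI[of _ _ "\<sigma> j"]) auto
qed

lemma Inv_eq:
  assumes phi: "\<phi> \<in> dG" and psi: "\<psi> \<in> dG" and eq: "lab_equiv V \<Gamma>G \<phi> \<psi>"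
  shows "Inv \<phi> = Inv \<psi>"
proof -
  have "\<phi> a = \<psi> a" using eq_root[OF eq aV] .
  moreover have "cset \<phi> i = cset \<psi> i" for i
    using cset_sub[OF phi psi eq] cset_sub[OF psi phi eq_sym[OF eq]] by blast
  ultimately show ?thesis by (simp add: Inv_def)
qed

lemma Inv_equiv:
  assumes phi: "\<phi> \<in> dG" and psi: "\<psi> \<in> dG" and eq: "Inv \<phi> = Inv \<psi>"
  shows "lab_equiv V \<Gamma>G \<phi> \<psi>"
proof -
  have ea: "\<phi> a = \<psi> a" using eq by (simp add: Inv_def)
  have cs: "cset \<phi> i = cset \<psi> i" if "i \<in> {1..g}" for i
  proof -
    have "(\<lambda>i\<in>{1..g}. cset \<phi> i) i = (\<lambda>i\<in>{1..g}. cset \<psi> i) i" using eq by (simp add: Inv_def)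
    thus ?thesis using that by simp
  qed
  have "\<forall>j\<in>{1..m}. \<exists>st. fst st \<in> {1..m} \<and> cls (fst st) = cls j \<and> snd st \<in> \<Gamma>i (cls j) \<and>
          (\<forall>x\<in>GV (cls j). loc \<psi> (fst st) (snd st x) = loc \<phi> j x)"
  proof
    fix j assume j: "j \<in> {1..m}"
    have "cli (cls j) (loc \<phi> j) \<in> cset \<phi> (cls j)" using j by (auto simp: cset_def)
    hence "cli (cls j) (loc \<phi> j) \<in> cset \<psi> (cls j)" using cs cls_in[OF j] by simp
    then obtain l where l: "l \<in> {1..m}" "cls l = cls j" "cli (cls j) (loc \<phi> j) = cli (cls j) (loc \<psi> l)"
      by (auto simp: cset_def)
    hence "eqi (cls j) (loc \<phi> j) (loc \<psi> l)" using cl_loc_iff[OF phi psi j l(1) l(2)] by simp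
    then obtain t where "t \<in> \<Gamma>i (cls j)" "\<forall>x\<in>GV (cls j). loc \<psi> l (t x) = loc \<phi> j x"
      by (auto simp: lab_equiv_def)
    thus "\<exists>st. fst st \<in> {1..m} \<and> cls (fst st) = cls j \<and> snd st \<in> \<Gamma>i (cls j) \<and>
          (\<forall>x\<in>GV (cls j). loc \<psi> (fst st) (snd st x) = loc \<phi> j x)"
      using l by (intro exI[of _ "(l, t)"]) auto
  qed
  from bchoice[OF this] obtain h where h: "\<forall>j\<in>{1..m}. fst (h j) \<in> {1..m} \<and> cls (fst (h j)) = cls j \<and>
      snd (h j) \<in> \<Gamma>i (cls j) \<and> (\<forall>x\<in>GV (cls j). loc \<psi> (fst (h j)) (snd (h j) x) = loc \<phi> j x)" ..
  define \<sigma> where "\<sigma> j = fst (h j)" for j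
  define \<tau> where "\<tau> j = snd (h j)" for j
  have sm: "\<sigma> j \<in> {1..m}" "cls (\<sigma> j) = cls j" "\<tau> j \<in> \<Gamma>i (cls j)"
    "\<forall>x\<in>GV (cls j). loc \<psi> (\<sigma> j) (\<tau> j x) = loc \<phi> j x" if "j \<in> {1..m}" for j
    using h that unfolding \<sigma>_def \<tau>_def by blast+
  have eqs: "eqi (cls j) (loc \<phi> j) (loc \<psi> (\<sigma> j))" if "j \<in> {1..m}" for j
    using sm[OF that] unfolding lab_equiv_def by blast
  have inj: "inj_on \<sigma> {1..m}"
  proof (rule inj_onI)
    fix j j' assume j: "j \<in> {1..m}" and j': "j' \<in> {1..m}" and e: "\<sigma> j = \<sigma> j'"
    have c: "cls j' = cls j" using sm(2)[OF j] sm(2)[OF j'] e by simp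
    have "eqi (cls j) (loc \<phi> j') (loc \<psi> (\<sigma> j))" using eqs[OF j'] e c by simp
    hence "eqi (cls j) (loc \<phi> j) (loc \<phi> j')" using eqs[OF j] eq_sym eq_trans by metis
    thus "j = j'" using loc_ineq[OF phi j j'] c by metis
  qed
  have "\<sigma> ` {1..m} \<subseteq> {1..m}" using sm(1) by blast
  hence bij: "bij_betw \<sigma> {1..m} {1..m}" using endo_inj_surj[OF _ _ inj] inj by (simp add: bij_betw_def)
  obtain \<pi> where p: "\<pi> \<in> \<Gamma>G" and pe: "\<forall>j\<in>{1..m}. \<forall>x\<in>GV (cls j). \<pi> (fi j x) = fi (\<sigma> j) (\<tau> j x)"
    using construct_ex[OF bij] sm by blast
  have "\<forall>j\<in>{1..m}. \<forall>x\<in>GV (cls j). \<psi> (\<pi> (fi j x)) = \<phi> (fi j x)"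
  proof (intro ballI)
    fix j x assume j: "j \<in> {1..m}" and x: "x \<in> GV (cls j)"
    have "\<psi> (\<pi> (fi j x)) = \<psi> (fi (\<sigma> j) (\<tau> j x))" using pe j x by simp
    also have "\<dots> = loc \<psi> (\<sigma> j) (\<tau> j x)" using Gi_in[OF sm(3)[OF j] x] sm(2)[OF j] by (simp add: loc_app)
    also have "\<dots> = loc \<phi> j x" using sm(4)[OF j] x by simp
    also have "\<dots> = \<phi> (fi j x)" using x by (simp add: loc_app)
    finally show "\<psi> (\<pi> (fi j x)) = \<phi> (fi j x)" .
  qed
  hence "\<forall>v\<in>V. \<psi> (\<pi> v) = \<phi> v" by (rule pres)
  thus ?thesis using p by (auto simp: lab_equiv_def)
qed


lemma finCi: assumes "i \<in> {1..g}" shows "finite (Ci i c)"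
proof -
  have "finite (di i)" using fin_dl[where W="GV i" and F="GE i" and r="r i" and k=k] Gi[OF assms] k
    by (simp add: graph_def)
  thus ?thesis by (simp add: Ci_def)
qed

lemma card_Ci: assumes i: "i \<in> {1..g}" and c: "c \<in> {1..k}"
  shows "card (Ci i c) = D_root (GV i) (GE i) k (r i) div k"
proof -
  have "Ci i c = cl (GV i) (\<Gamma>i i) k ` Ar (GV i) (GE i) (r i) k c"
    using Ar_def[where W="GV i" and F="GE i" and r="r i" and k=k and c=c] Gi[OF i] k
    by (simp add: Ci_def graph_def)
  thus ?thesis using D_div[where W="GV i" and F="GE i" and r="r i" and k=k and c=c] Gi[OF i] k c
    by (simp add: graph_def)
qed

lemma Inv_surj:
  assumes cS: "(c, S) \<in> TT" shows "(c, S) \<in> Inv ` dG"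
proof -
  have c: "c \<in> {1..k}" and S: "S \<in> PiE {1..g} (\<lambda>i. {X. X \<subseteq> Ci i c \<and> card X = mc i})"
    using cS by (auto simp: TT_def)
  have Si: "S i \<subseteq> Ci i c" "card (S i) = mc i" if "i \<in> {1..g}" for i using S that by auto
  have "\<forall>i\<in>{1..g}. \<exists>b. bij_betw b {j\<in>{1..m}. cls j = i} (S i)"
  proof
    fix i assume i: "i \<in> {1..g}"
    have "finite (S i)" using finite_subset[OF Si(1)[OF i] finCi[OF i]] .
    thus "\<exists>b. bij_betw b {j\<in>{1..m}. cls j = i} (S i)"
      using finite_same_card_bij[of "{j\<in>{1..m}. cls j = i}" "S i"] Si(2)[OF i] by (simp add: mc_def)
  qed
  from bchoice[OF this] obtain b where b: "\<forall>i\<in>{1..g}. bij_betw (b i) {j\<in>{1..m}. cls j = i} (S i)" ..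
  have "\<forall>j\<in>{1..m}. \<exists>\<psi>. \<psi> \<in> di (cls j) \<and> \<psi> (r (cls j)) = c \<and> b (cls j) j = cli (cls j) \<psi>"
  proof
    fix j assume j: "j \<in> {1..m}"
    have "b (cls j) j \<in> S (cls j)" using b cls_in[OF j] j bij_betwE by blast
    hence "b (cls j) j \<in> Ci (cls j) c" using Si(1) cls_in[OF j] by blast
    thus "\<exists>\<psi>. \<psi> \<in> di (cls j) \<and> \<psi> (r (cls j)) = c \<and> b (cls j) j = cli (cls j) \<psi>" by (auto simp: Ci_def)
  qed
  from bchoice[OF this] obtain ps where ps: "\<forall>j\<in>{1..m}. ps j \<in> di (cls j) \<and> ps j (r (cls j)) = c \<and>
     b (cls j) j = cli (cls j) (ps j)" ..
  define \<phi> where "\<phi> = restrict (\<lambda>v. if v = a then c else ps (idx v) (f (idx v) v)) V"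
  have \<phi>Pi: "\<phi> \<in> V \<rightarrow>\<^sub>E {1..k}"
  proof -
    have "ps (idx v) (f (idx v) v) \<in> {1..k}" if "v \<in> V" "v \<noteq> a" for v
    proof -
      have iv: "idx v \<in> {1..m}" "v \<in> HV (idx v)" using idx that by auto
      hence "ps (idx v) \<in> GV (cls (idx v)) \<rightarrow>\<^sub>E {1..k}" "f (idx v) v \<in> GV (cls (idx v))"
        using ps f_in by (auto simp: dist_labelings_def)
      thus ?thesis by auto
    qed
    thus ?thesis using c by (auto simp: \<phi>_def)
  qed
  have loc\<phi>: "loc \<phi> j = ps j" if j: "j \<in> {1..m}" for j
  proof
    fix x show "loc \<phi> j x = ps j x"
    proof (cases "x \<in> GV (cls j)")
      case x: True
      have fV: "fi j x \<in> V" using fi_in[OF j x] HV_sub[OF j] by blast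
      have l: "loc \<phi> j x = \<phi> (fi j x)" using loc_app[OF x] .
      show ?thesis
      proof (cases "x = r (cls j)")
        case True
        thus ?thesis using l fi_r[OF j] ps j aV by (simp add: \<phi>_def)
      next
        case False
        hence na: "fi j x \<noteq> a" using fi_a[OF j x] by simp
        moreover have "idx (fi j x) = j" using idx_eq[OF j fi_in[OF j x] na] .
        ultimately show ?thesis using l fV f_fi[OF j x] by (simp add: \<phi>_def)
      qed
    next
      case False
      have "ps j \<in> extensional (GV (cls j))" using ps j by (auto simp: dist_labelings_def PiE_def)
      thus ?thesis using False by (simp add: loc_def extensional_def)
    qed
  qed
  have \<phi>d: "\<phi> \<in> dG"
  proof -
    have "\<pi> = id" if p: "\<pi> \<in> \<Gamma>G" and e: "\<forall>v\<in>V. \<phi> (\<pi> v) = \<phi> v" for \<pi>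
    proof -
      obtain \<sigma> \<tau> where d: "\<forall>j\<in>{1..m}. \<sigma> j \<in> {1..m} \<and> cls (\<sigma> j) = cls j \<and> \<tau> j \<in> \<Gamma>i (cls j) \<and>
            (\<forall>x\<in>GV (cls j). \<pi> (fi j x) = fi (\<sigma> j) (\<tau> j x))" using decompose[OF p] by blast
      have "\<forall>j\<in>{1..m}. \<forall>x\<in>GV (cls j). \<pi> (fi j x) = fi j x"
      proof (intro ballI)
        fix j x assume j: "j \<in> {1..m}" and x: "x \<in> GV (cls j)"
        have sj: "\<sigma> j \<in> {1..m}" "cls (\<sigma> j) = cls j" "\<tau> j \<in> \<Gamma>i (cls j)"
          "\<forall>x\<in>GV (cls j). \<pi> (fi j x) = fi (\<sigma> j) (\<tau> j x)" using d j by auto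
        have "eqi (cls j) (loc \<phi> j) (loc \<phi> (\<sigma> j))" using transfer[where \<sigma>=\<sigma> and \<tau>=\<tau>, OF p e j sj(1) sj(2) sj(3) sj(4)] .
        hence "eqi (cls j) (ps j) (ps (\<sigma> j))" using loc\<phi> j sj(1) by simp
        moreover have "ps j \<in> di (cls j)" using ps j by blast
        moreover have "ps (\<sigma> j) \<in> di (cls (\<sigma> j))" using ps sj(1) by blast
        hence "ps (\<sigma> j) \<in> di (cls j)" using sj(2) by simp
        ultimately have "cli (cls j) (ps j) = cli (cls j) (ps (\<sigma> j))"
          using cl_eq_iff[of "ps j" "GV (cls j)" "GE (cls j)" "r (cls j)" k "ps (\<sigma> j)"] by blast
        moreover have "b (cls (\<sigma> j)) (\<sigma> j) = cli (cls (\<sigma> j)) (ps (\<sigma> j))" using ps sj(1) by blast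
        moreover have "b (cls j) j = cli (cls j) (ps j)" using ps j by blast
        ultimately have bb: "b (cls j) j = b (cls j) (\<sigma> j)" using sj(2) by simp
        have "bij_betw (b (cls j)) {l\<in>{1..m}. cls l = cls j} (S (cls j))" using b cls_in[OF j] by blast
        hence "inj_on (b (cls j)) {l\<in>{1..m}. cls l = cls j}" by (simp add: bij_betw_def)
        hence sjj: "\<sigma> j = j" using bb j sj(1,2) by (auto simp: inj_on_def)
        have "\<forall>y\<in>GV (cls j). ps j (\<tau> j y) = ps j y"
        proof
          fix y assume y: "y \<in> GV (cls j)"
          have ty: "\<tau> j y \<in> GV (cls j)" using Gi_in[OF sj(3) y] .
          have "ps j (\<tau> j y) = loc \<phi> j (\<tau> j y)" using loc\<phi>[OF j] by simp
          also have "\<dots> = \<phi> (fi j (\<tau> j y))" using loc_app[OF ty] .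
          also have "\<dots> = \<phi> (\<pi> (fi j y))" using sj(4) y sjj by simp
          also have "\<dots> = \<phi> (fi j y)" using e fi_in[OF j y] HV_sub[OF j] by blast
          also have "\<dots> = loc \<phi> j y" using loc_app[OF y] by simp
          also have "\<dots> = ps j y" using loc\<phi>[OF j] by simp
          finally show "ps j (\<tau> j y) = ps j y" .
        qed
        hence "\<tau> j = id" using di_id[of "ps j" "cls j" "\<tau> j"] ps j sj(3) by blast
        thus "\<pi> (fi j x) = fi j x" using sj(4) x sjj by simp
      qed
      thus "\<pi> = id" using ident[OF p] by blast
    qed
    thus ?thesis using \<phi>Pi by (auto simp: dist_labelings_def)
  qed
  have "Inv \<phi> = (c, S)"
  proof -
    have "\<phi> a = c" using aV by (simp add: \<phi>_def)
    moreover have "(\<lambda>i\<in>{1..g}. cset \<phi> i) = S"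
    proof
      fix i show "(\<lambda>i\<in>{1..g}. cset \<phi> i) i = S i"
      proof (cases "i \<in> {1..g}")
        case True
        have "cset \<phi> i = (\<lambda>j. cli i (loc \<phi> j)) ` {j\<in>{1..m}. cls j = i}" by (simp add: cset_def)
        also have "\<dots> = b i ` {j\<in>{1..m}. cls j = i}"
          using loc\<phi> ps by (intro image_cong) auto
        also have "\<dots> = S i" using b True by (simp add: bij_betw_def)
        finally show ?thesis using True by simp
      next
        case False thus ?thesis using S by (auto simp: PiE_def extensional_def)
      qed
    qed
    ultimately show ?thesis by (simp add: Inv_def)
  qed
  hence "(c, S) = Inv \<phi>" by simp
  thus ?thesis using \<phi>d by blast
qed

lemma main:
  "D_root V E k a = k * (\<Prod>i\<in>{1..g}. (D_root (GV i) (GE i) k (r i) div k) choose card {j \<in> {1..m}. cls j = i})"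
proof -
  have "D_root V E k a = card (cl V \<Gamma>G k ` dG)" by (simp add: D_root_def D_cl)
  also have "\<dots> = card (Inv ` dG)"
  proof (rule card_image_kernel, intro ballI)
    fix \<phi> \<psi> assume "\<phi> \<in> dG" "\<psi> \<in> dG"
    thus "cl V \<Gamma>G k \<phi> = cl V \<Gamma>G k \<psi> \<longleftrightarrow> Inv \<phi> = Inv \<psi>"
      using cl_eq_iff[of \<phi> V E a k \<psi>] Inv_eq Inv_equiv by blast
  qed
  also have "Inv ` dG = TT"
  proof
    show "Inv ` dG \<subseteq> TT" using Inv_T by blast
    show "TT \<subseteq> Inv ` dG"
    proof
      fix x assume "x \<in> TT"
      moreover obtain c S where "x = (c, S)" by fastforce
      ultimately show "x \<in> Inv ` dG" using Inv_surj by blast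
    qed
  qed
  also have "card TT = (\<Sum>c\<in>{1..k}. \<Prod>i\<in>{1..g}. card {X. X \<subseteq> Ci i c \<and> card X = mc i})"
  proof -
    have fin: "finite {X. X \<subseteq> Ci i c \<and> card X = mc i}" if "i \<in> {1..g}" for i c
      using finCi[OF that] by (rule rev_finite_subset[OF finite_Pow_iff[THEN iffD2]]) auto
    show ?thesis unfolding TT_def
      by (subst card_SigmaI) (auto simp: card_PiE intro!: finite_PiE fin)
  qed
  also have "\<dots> = (\<Sum>c\<in>{1..k}. \<Prod>i\<in>{1..g}. (D_root (GV i) (GE i) k (r i) div k) choose mc i)"
  proof (intro sum.cong prod.cong refl)
    fix c i assume c: "c \<in> {1..k}" and i: "i \<in> {1..g}"
    show "card {X. X \<subseteq> Ci i c \<and> card X = mc i} = (D_root (GV i) (GE i) k (r i) div k) choose mc i"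
      using n_subsets[OF finCi[OF i]] card_Ci[OF i c] by simp
  qed
  also have "\<dots> = k * (\<Prod>i\<in>{1..g}. (D_root (GV i) (GE i) k (r i) div k) choose mc i)" by simp
  finally show ?thesis by (simp add: mc_def)
qed

end

theorem theorem6:
  fixes V :: "'a set" and E :: "'a \<Rightarrow> 'a \<Rightarrow> bool" and a :: 'a
    and m g :: nat and HV :: "nat \<Rightarrow> 'a set" and HE :: "nat \<Rightarrow> 'a \<Rightarrow> 'a \<Rightarrow> bool"
    and cls :: "nat \<Rightarrow> nat"
    and GV :: "nat \<Rightarrow> 'b set" and GE :: "nat \<Rightarrow> 'b \<Rightarrow> 'b \<Rightarrow> bool" and r :: "nat \<Rightarrow> 'b"
    and k :: nat
  assumes G: "graph V E" and aV: "a \<in> V" and m: "m \<ge> 1"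
    and Hsub: "\<And>j. j \<in> {1..m} \<Longrightarrow> graph (HV j) (HE j) \<and> HV j \<subseteq> V
                    \<and> (\<forall>x y. HE j x y \<longrightarrow> E x y)"
    and Hconn: "\<And>j. j \<in> {1..m} \<Longrightarrow> connected_graph (HV j) (HE j) \<and> a \<in> HV j"
    and Hdel: "\<And>j. j \<in> {1..m} \<Longrightarrow>
                 connected_graph (HV j - {a}) (\<lambda>x y. x \<noteq> a \<and> y \<noteq> a \<and> HE j x y)"
    and Hdisj: "\<And>j l. j \<in> {1..m} \<Longrightarrow> l \<in> {1..m} \<Longrightarrow> j \<noteq> l \<Longrightarrow> HV j \<inter> HV l = {a}"
    and Vunion: "V = (\<Union>j\<in>{1..m}. HV j)"
    and Eunique: "\<And>x y. E x y \<Longrightarrow> \<exists>!j. j \<in> {1..m} \<and> HE j x y"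
    and cls_range: "cls ` {1..m} = {1..g}"
    and cls_equiv: "\<And>j l. j \<in> {1..m} \<Longrightarrow> l \<in> {1..m} \<Longrightarrow>
        rooted_iso (HV j) (HE j) a (HV l) (HE l) a \<longleftrightarrow> cls j = cls l"
    and Gi: "\<And>i. i \<in> {1..g} \<Longrightarrow> graph (GV i) (GE i) \<and> r i \<in> GV i"
    and cls_iso: "\<And>j. j \<in> {1..m} \<Longrightarrow> rooted_iso (HV j) (HE j) a (GV (cls j)) (GE (cls j)) (r (cls j))"
    and k: "k \<ge> 1"
  shows "D_root V E k a =
           k * (\<Prod>i\<in>{1..g}. (D_root (GV i) (GE i) k (r i) div k) choose card {j \<in> {1..m}. cls j = i})"
  proof -
  interpret cfg V E a m g HV HE cls GV GE r k
    by (rule cfg.intro) (fact assms)+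
  show ?thesis by (rule main)
qed

end
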